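(* Let $P\in\mathcal{M}$ be the data-generating distribution, let $\boldsymbol{\psi}=(\psi_k)_{k\in\mathbb{K}}$ be a regularization of a parameter $\psi:\mathcal{M}\to\Theta$, and let $d$ be a distance such that $\boldsymbol{\psi}$ is continuous at $P$ with respect to $d$ with family of moduli of continuity $(\delta_k)_{k\in\mathbb{K}}$. Suppose $d(P_n,P)=o_P(1)$. Then there exists a sequence $(k_n)_{n\in\mathbb{N}}$ in $\mathbb{K}$ such that $$B_{k_n}(P)=o(1)\quad\text{and}\quad \delta_{k_n}(d(P_n,P))=o_P(1),$$ and $$\|\psi_{k_n}(P_n)-\psi(P)\|_\Theta=o_P(1).$$
   Context: Let $\mathbb{Z}\subseteq\mathbb{R}^d$, let $\mathcal{P}(\mathbb{Z})$ be the set of Borel probability measures on $\mathbb{Z}$ and $ca(\mathbb{Z})$ the space of signed Borel measures of finite variation. Data $Z_1,Z_2,\dots$ are IID with law $P$; $\mathbf{P}$ is the induced product probability on $\mathbb{Z}^\infty$, and $o_P,O_P$ refer to $\mathbf{P}$. A model is a subset $\mathcal{M}\subseteq\mathcal{P}(\mathbb{Z})$; a parameter is a map $\psi:\mathcal{M}\to\Theta$ where $(\Theta,\|\cdot\|_\Theta)$ is a normed space. $\mathcal{D}$ denotes the set of discretely supported probability measures on $\mathbb{Z}$ and $P_n=n^{-1}\sum_{i=1}^n\delta_{Z_i}\in\mathcal{D}$ the empirical distribution. A tuning set is a subset $\mathbb{K}\subseteq\mathbb{R}_+$ unbounded from above. A regularization of $\psi$ is a family $\boldsymbol{\psi}=(\psi_k)_{k\in\mathbb{K}}$,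 $\mathbb{K}$ a tuning set, with $\psi_k:\mathbb{D}_\psi\subseteq ca(\mathbb{Z})\to\Theta$ for a set $\mathbb{D}_\psi\supseteq\mathcal{M}\cup\mathcal{D}$, such that for every $P\in\mathcal{M}$ the approximation error $B_k(P):=\|\psi_k(P)-\psi(P)\|_\Theta$ tends to $0$ as $k\to\infty$. A modulus of continuity is a continuous non-decreasing $f:\mathbb{R}_+\to\mathbb{R}_+$ with $f(t)=0$ iff $t=0$. The regularization is continuous at $P\in\mathbb{D}_\psi$ with respect to $d$ if there is a family of moduli of continuity $(\delta_k)$ with $\|\psi_k(P')-\psi_k(P)\|_\Theta\le\delta_k(d(P',P))$ for all $k\in\mathbb{K}$ and all $P'\in\mathbb{D}_\psi$. *)

theory Defs
  imports "HOL-Probability.Probability"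
begin

text \<open>Measures on a subset Z of a Euclidean space are represented as set functions
  \<open>'a set \<Rightarrow> real\<close>, defined on the Borel sets of Z (the trace sigma-algebra)
  and equal to 0 on all other sets.\<close>

definition borel_sets_on :: "'a::euclidean_space set \<Rightarrow> 'a set set" where
  "borel_sets_on Z = sets (restrict_space borel Z)"

definition ca :: "'a::euclidean_space set \<Rightarrow> ('a set \<Rightarrow> real) set" where
  "ca Z = {\<mu>. (\<forall>A. A \<notin> borel_sets_on Z \<longrightarrow> \<mu> A = 0)
            \<and> \<mu> {} = 0
            \<and> (\<forall>F::nat \<Rightarrow> 'a set. range F \<subseteq> borel_sets_on Z \<longrightarrow> disjoint_family F
                  \<longrightarrow> (\<lambda>i. \<mu> (F i)) sums \<mu> (\<Union>i. F i))
            \<and> (\<exists>C. \<forall>(I::nat set) F. finite I \<longrightarrow> F ` I \<subseteq> borel_sets_on Z \<longrightarrow> disjoint_family_on F I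
                  \<longrightarrow> (\<Sum>i\<in>I. \<bar>\<mu> (F i)\<bar>) \<le> C)}"

definition prob_measures :: "'a::euclidean_space set \<Rightarrow> ('a set \<Rightarrow> real) set" where
  "prob_measures Z = {\<mu> \<in> ca Z. (\<forall>A. \<mu> A \<ge> 0) \<and> \<mu> Z = 1}"

definition discrete_measures :: "'a::euclidean_space set \<Rightarrow> ('a set \<Rightarrow> real) set" where
  "discrete_measures Z = {\<mu> \<in> prob_measures Z. \<exists>S. countable S \<and> S \<subseteq> Z \<and> \<mu> (Z - S) = 0}"

definition empirical ::
  "'a::euclidean_space set \<Rightarrow> (nat \<Rightarrow> 'w \<Rightarrow> 'a) \<Rightarrow> nat \<Rightarrow> 'w \<Rightarrow> 'a set \<Rightarrow> real" where
  "empirical Z X n \<omega> A =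
     (if A \<in> borel_sets_on Z then (\<Sum>i<n. indicator A (X i \<omega>)) / real n else 0)"

text \<open>Outer probability (events need not be measurable).\<close>
definition outer_prob :: "'w measure \<Rightarrow> 'w set \<Rightarrow> real" where
  "outer_prob \<Omega> A = Inf {measure \<Omega> B | B. B \<in> sets \<Omega> \<and> A \<inter> space \<Omega> \<subseteq> B}"

definition o_P1 :: "'w measure \<Rightarrow> (nat \<Rightarrow> 'w \<Rightarrow> real) \<Rightarrow> bool" where
  "o_P1 \<Omega> Y \<longleftrightarrow> (\<forall>\<epsilon>>0. ((\<lambda>n. outer_prob \<Omega> {\<omega> \<in> space \<Omega>. \<epsilon> < \<bar>Y n \<omega>\<bar>}) \<longlongrightarrow> 0) sequentially)"

definition modulus_of_continuity :: "(real \<Rightarrow> real) \<Rightarrow> bool" where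
  "modulus_of_continuity f \<longleftrightarrow> continuous_on {0..} f \<and> mono_on {0..} f
      \<and> (\<forall>t\<ge>0. f t \<ge> 0) \<and> (\<forall>t\<ge>0. f t = 0 \<longleftrightarrow> t = 0)"

definition tuning_set :: "real set \<Rightarrow> bool" where
  "tuning_set K \<longleftrightarrow> K \<subseteq> {0..} \<and> (\<forall>b. \<exists>k\<in>K. k > b)"

definition regularization ::
  "'a::euclidean_space set \<Rightarrow> ('a set \<Rightarrow> real) set \<Rightarrow> (('a set \<Rightarrow> real) \<Rightarrow> 'b::real_normed_vector)
   \<Rightarrow> real set \<Rightarrow> ('a set \<Rightarrow> real) set \<Rightarrow> (real \<Rightarrow> ('a set \<Rightarrow> real) \<Rightarrow> 'b) \<Rightarrow> bool" where
  "regularization Z M \<psi> K D\<psi> \<psi>k \<longleftrightarrow> tuning_set K \<and> M \<union> discrete_measures Z \<subseteq> D\<psi> \<and> D\<psi> \<subseteq> ca Z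
     \<and> (\<forall>Q\<in>M. ((\<lambda>k. norm (\<psi>k k Q - \<psi> Q)) \<longlongrightarrow> 0) (inf at_top (principal K)))"

definition approx_error :: "(real \<Rightarrow> 'm \<Rightarrow> 'b::real_normed_vector) \<Rightarrow> ('m \<Rightarrow> 'b) \<Rightarrow> real \<Rightarrow> 'm \<Rightarrow> real" where
  "approx_error \<psi>k \<psi> k P = norm (\<psi>k k P - \<psi> P)"

definition continuous_reg_at ::
  "real set \<Rightarrow> 'm set \<Rightarrow> (real \<Rightarrow> 'm \<Rightarrow> 'b::real_normed_vector) \<Rightarrow> ('m \<Rightarrow> 'm \<Rightarrow> real)
   \<Rightarrow> (real \<Rightarrow> real \<Rightarrow> real) \<Rightarrow> 'm \<Rightarrow> bool" where
  "continuous_reg_at K D\<psi> \<psi>k d \<delta> P \<longleftrightarrow> P \<in> D\<psi> \<and> (\<forall>k\<in>K. modulus_of_continuity (\<delta> k))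
     \<and> (\<forall>k\<in>K. \<forall>Q\<in>D\<psi>. norm (\<psi>k k Q - \<psi>k k P) \<le> \<delta> k (d Q P))"

end

theory Submission
  imports Defs
begin


lemma empirical_discrete:
  fixes Z :: "'a::euclidean_space set"
  assumes inZ: "\<And>i. X i \<omega> \<in> Z" and n: "n \<ge> 1"
  shows "empirical Z X n \<omega> \<in> discrete_measures Z"
proof -
  let ?\<Sigma> = "borel_sets_on Z"
  define \<mu> where "\<mu> = empirical Z X n \<omega>"
  have sa: "sigma_algebra Z ?\<Sigma>"
  proof -
    have "sigma_algebra (space (restrict_space borel Z)) (sets (restrict_space borel Z))"
      by (rule sets.sigma_algebra_axioms)
    then show ?thesis by (simp add: borel_sets_on_def space_restrict_space)
  qed
  have Z\<Sigma>: "Z \<in> ?\<Sigma>" using sa by (simp add: sigma_algebra_iff2) (metis Diff_empty)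
  have mu: "\<mu> A = (if A \<in> ?\<Sigma> then (\<Sum>i<n. indicator A (X i \<omega>)) / real n else 0)" for A
    by (simp add: \<mu>_def empirical_def)
  have nonneg: "\<mu> A \<ge> 0" for A by (simp add: mu sum_nonneg)
  have ca: "\<mu> \<in> ca Z"
    unfolding ca_def
  proof (intro CollectI conjI allI impI)
    fix A assume "A \<notin> ?\<Sigma>" then show "\<mu> A = 0" by (simp add: mu)
  next
    show "\<mu> {} = 0" by (simp add: mu)
  next
    fix F :: "nat \<Rightarrow> 'a set" assume r: "range F \<subseteq> ?\<Sigma>" and dj: "disjoint_family F"
    have U: "(\<Union>i. F i) \<in> ?\<Sigma>" using sigma_algebra.countable_UN[OF sa r] by simp
    have "(\<lambda>i. (\<Sum>j<n. indicator (F i) (X j \<omega>) :: real) / real n) sums ((\<Sum>j<n. indicator (\<Union>i. F i) (X j \<omega>)) / real n)"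
      apply (intro sums_divide sums_sum indicator_sums)
      using dj by (auto simp: disjoint_family_on_def)
    then show "(\<lambda>i. \<mu> (F i)) sums \<mu> (\<Union>i. F i)" using r U by (simp add: mu image_subset_iff)
  next
    show "\<exists>C. \<forall>(I::nat set) F. finite I \<longrightarrow> F ` I \<subseteq> ?\<Sigma> \<longrightarrow> disjoint_family_on F I
                  \<longrightarrow> (\<Sum>i\<in>I. \<bar>\<mu> (F i)\<bar>) \<le> C"
    proof (intro exI allI impI)
      fix I :: "nat set" and F assume fI: "finite I" and FI: "F ` I \<subseteq> ?\<Sigma>" and dj: "disjoint_family_on F I"
      have "(\<Sum>i\<in>I. \<bar>\<mu> (F i)\<bar>) = (\<Sum>i\<in>I. (\<Sum>j<n. indicator (F i) (X j \<omega>)) / real n)"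
        using FI by (intro sum.cong refl) (simp add: mu sum_nonneg image_subset_iff)
      also have "\<dots> = (\<Sum>j<n. (\<Sum>i\<in>I. indicator (F i) (X j \<omega>))) / real n"
        unfolding sum_divide_distrib[symmetric] by (subst sum.swap) (rule refl)
      also have "\<dots> = (\<Sum>j<n. indicator (\<Union>(F ` I)) (X j \<omega>)) / real n"
        by (simp add: indicator_UN_disjoint[OF fI dj])
      also have "\<dots> \<le> (\<Sum>j<n. 1) / real n"
        by (intro divide_right_mono sum_mono) (auto simp: indicator_def)
      also have "\<dots> = 1" using n by simp
      finally show "(\<Sum>i\<in>I. \<bar>\<mu> (F i)\<bar>) \<le> 1" .
    qed
  qed
  have "\<mu> Z = 1" using Z\<Sigma> n inZ by (simp add: mu)
  then have pm: "\<mu> \<in> prob_measures Z" using ca nonneg by (simp add: prob_measures_def)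
  have "\<mu> (Z - (\<lambda>i. X i \<omega>) ` {..<n}) = 0"
    by (simp add: mu)
  then have "\<mu> \<in> discrete_measures Z" using pm inZ
    unfolding discrete_measures_def
    by (intro CollectI conjI exI[of _ "(\<lambda>i. X i \<omega>) ` {..<n}"]) (auto intro: countable_finite)
  then show ?thesis by (simp add: \<mu>_def)
qed



lemma outer_prob_nonneg: "outer_prob \<Omega> A \<ge> 0"
  unfolding outer_prob_def
  by (rule cInf_greatest) (auto intro!: exI[of _ "space \<Omega>"])

lemma outer_prob_mono: "outer_prob \<Omega> A \<le> outer_prob \<Omega> A'" if "A \<subseteq> A'"
  unfolding outer_prob_def
proof (rule cInf_superset_mono)
  show "{measure \<Omega> B |B. B \<in> sets \<Omega> \<and> A' \<inter> space \<Omega> \<subseteq> B} \<noteq> {}" by blast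
  show "bdd_below {measure \<Omega> B |B. B \<in> sets \<Omega> \<and> A \<inter> space \<Omega> \<subseteq> B}"
    by (rule bdd_belowI[of _ 0]) auto
qed (use that in blast)

lemma inv_suc_lim: "((\<lambda>m::nat. 1 / (real m + 1)) \<longlongrightarrow> 0) sequentially"
  using LIMSEQ_inverse_real_of_nat by (simp add: inverse_eq_divide add.commute)

lemma diag:
  fixes f :: "nat \<Rightarrow> nat \<Rightarrow> real"
  assumes lim: "\<And>m. (f m \<longlongrightarrow> 0) sequentially"
  shows "\<exists>g. filterlim g at_top sequentially \<and> ((\<lambda>n. f (g n) n) \<longlongrightarrow> 0) sequentially"
proof -
  have "\<forall>m. \<exists>N. \<forall>n\<ge>N. \<bar>f m n\<bar> < 1 / (real m + 1)"
  proof
    fix m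
    have "1 / (real m + 1) > 0" by simp
    from LIMSEQ_D[OF lim this] show "\<exists>N. \<forall>n\<ge>N. \<bar>f m n\<bar> < 1 / (real m + 1)" by simp
  qed
  then obtain N where N: "\<And>m n. n \<ge> N m \<Longrightarrow> \<bar>f m n\<bar> < 1 / (real m + 1)" by metis
  define N' where "N' j = N j + j" for j
  define g where "g n = Max ({0} \<union> {j. N' j \<le> n})" for n
  have fin: "finite ({0} \<union> {j. N' j \<le> n})" for n
    by (rule finite_subset[of _ "{..n}"]) (auto simp: N'_def)
  have ge: "n \<ge> N' j \<Longrightarrow> j \<le> g n" for n j
    unfolding g_def using fin by (intro Max_ge) auto
  have gin: "n \<ge> N' 0 \<Longrightarrow> N' (g n) \<le> n" for n
  proof -
    assume n: "n \<ge> N' 0"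
    have "g n \<in> {0} \<union> {j. N' j \<le> n}" unfolding g_def using fin by (intro Max_in) auto
    then show ?thesis using n by auto
  qed
  have glim: "filterlim g at_top sequentially"
    unfolding filterlim_at_top
    using ge by (auto simp: eventually_sequentially)
  have "eventually (\<lambda>n. norm (f (g n) n) \<le> 1 / (real (g n) + 1)) sequentially"
    unfolding eventually_sequentially
  proof (intro exI allI impI)
    fix n assume "N' 0 \<le> n"
    then have "N (g n) \<le> n" using gin by (fastforce simp: N'_def)
    then show "norm (f (g n) n) \<le> 1 / (real (g n) + 1)" using N by (simp add: less_imp_le)
  qed
  moreover have "((\<lambda>n. 1 / (real (g n) + 1)) \<longlongrightarrow> 0) sequentially"
    using filterlim_compose[OF inv_suc_lim glim] by simp
  ultimately have "((\<lambda>n. f (g n) n) \<longlongrightarrow> 0) sequentially" by (rule Lim_null_comparison)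
  then show ?thesis using glim by blast
qed



theorem theorem1:
  fixes Z :: "'a::euclidean_space set"
    and M :: "('a set \<Rightarrow> real) set"
    and \<psi> :: "('a set \<Rightarrow> real) \<Rightarrow> 'b::real_normed_vector"
    and K :: "real set" and D\<psi> :: "('a set \<Rightarrow> real) set"
    and \<psi>k :: "real \<Rightarrow> ('a set \<Rightarrow> real) \<Rightarrow> 'b"
    and d :: "('a set \<Rightarrow> real) \<Rightarrow> ('a set \<Rightarrow> real) \<Rightarrow> real"
    and \<delta> :: "real \<Rightarrow> real \<Rightarrow> real"
    and P :: "'a set \<Rightarrow> real"
    and \<Omega> :: "'w measure" and X :: "nat \<Rightarrow> 'w \<Rightarrow> 'a"
  assumes model: "M \<subseteq> prob_measures Z"
    and P_in: "P \<in> M"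
    and prob: "prob_space \<Omega>"
    and rv: "\<And>i. X i \<in> borel_measurable \<Omega>"
    and inZ: "\<And>i \<omega>. \<omega> \<in> space \<Omega> \<Longrightarrow> X i \<omega> \<in> Z"
    and indep: "prob_space.indep_vars \<Omega> (\<lambda>_. borel) X UNIV"
    and law: "\<And>i A. A \<in> borel_sets_on Z \<Longrightarrow> measure \<Omega> {\<omega> \<in> space \<Omega>. X i \<omega> \<in> A} = P A"
    and reg: "regularization Z M \<psi> K D\<psi> \<psi>k"
    and d_nonneg: "\<And>Q Q'. Q \<in> D\<psi> \<Longrightarrow> Q' \<in> D\<psi> \<Longrightarrow> d Q Q' \<ge> 0"
    and cont: "continuous_reg_at K D\<psi> \<psi>k d \<delta> P"
    and consistent: "o_P1 \<Omega> (\<lambda>n \<omega>. d (empirical Z X n \<omega>) P)"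
  shows "\<exists>kn :: nat \<Rightarrow> real. (\<forall>n. kn n \<in> K)
           \<and> ((\<lambda>n. approx_error \<psi>k \<psi> (kn n) P) \<longlonglongrightarrow> 0)
           \<and> o_P1 \<Omega> (\<lambda>n \<omega>. \<delta> (kn n) (d (empirical Z X n \<omega>) P))
           \<and> o_P1 \<Omega> (\<lambda>n \<omega>. norm (\<psi>k (kn n) (empirical Z X n \<omega>) - \<psi> P))"
proof -
  from reg have tK: "tuning_set K" and DD: "discrete_measures Z \<subseteq> D\<psi>" and MD: "M \<subseteq> D\<psi>"
    and conv: "((\<lambda>k. norm (\<psi>k k P - \<psi> P)) \<longlongrightarrow> 0) (inf at_top (principal K))"
    using P_in unfolding regularization_def by auto
  from cont have PD: "P \<in> D\<psi>" and modK: "\<And>k. k \<in> K \<Longrightarrow> modulus_of_continuity (\<delta> k)"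
    and bnd: "\<And>k Q. k \<in> K \<Longrightarrow> Q \<in> D\<psi> \<Longrightarrow> norm (\<psi>k k Q - \<psi>k k P) \<le> \<delta> k (d Q P)"
    unfolding continuous_reg_at_def by auto
  have PnD: "empirical Z X n \<omega> \<in> D\<psi>" if "\<omega> \<in> space \<Omega>" "n \<ge> 1" for n \<omega>
    using empirical_discrete[of X \<omega> Z n] inZ that DD by auto
  define dn where "dn n \<omega> = d (empirical Z X n \<omega>) P" for n \<omega>
  have dnn: "dn n \<omega> \<ge> 0" if "\<omega> \<in> space \<Omega>" "n \<ge> 1" for n \<omega>
    unfolding dn_def using d_nonneg[OF PnD[OF that] PD] .
  have "\<forall>m::nat. \<exists>k. k \<in> K \<and> real m < k" using tK unfolding tuning_set_def by blast
  then obtain ks where ksK: "\<And>m. ks m \<in> K" and ksgt: "\<And>m. real m < ks m" by metis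
  have "filterlim ks at_top sequentially"
    by (rule filterlim_at_top_mono[OF filterlim_real_sequentially]) (simp add: less_imp_le ksgt)
  moreover have "filterlim ks (principal K) sequentially"
    unfolding filterlim_principal using ksK by simp
  ultimately have kslim: "filterlim ks (inf at_top (principal K)) sequentially"
    by (simp add: filterlim_inf)
  have Bks: "((\<lambda>m. approx_error \<psi>k \<psi> (ks m) P) \<longlongrightarrow> 0) sequentially"
    unfolding approx_error_def using filterlim_compose[OF conv kslim] .
  define f where "f m n = outer_prob \<Omega> {\<omega> \<in> space \<Omega>. 1 / (real m + 1) < \<bar>\<delta> (ks m) (dn n \<omega>)\<bar>}" for m n
  have flim: "(f m \<longlongrightarrow> 0) sequentially" for m
  proof -
    let ?k = "ks m" and ?e = "1 / (real m + 1)"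
    have e: "?e > 0" by simp
    from modK[OF ksK[of m]] have co: "continuous_on {0..} (\<delta> ?k)" and z: "\<delta> ?k 0 = 0"
      unfolding modulus_of_continuity_def by auto
    from co e obtain \<eta> where \<eta>: "\<eta> > 0" and h: "\<And>t. t \<in> {0..} \<Longrightarrow> dist t 0 < \<eta> \<Longrightarrow> dist (\<delta> ?k t) (\<delta> ?k 0) < ?e"
      unfolding continuous_on_iff by (metis atLeast_iff order_refl)
    have c: "((\<lambda>n. outer_prob \<Omega> {\<omega> \<in> space \<Omega>. \<eta>/2 < \<bar>dn n \<omega>\<bar>}) \<longlongrightarrow> 0) sequentially"
      using consistent[unfolded o_P1_def, rule_format, of "\<eta>/2"] \<eta> unfolding dn_def by simp
    have "eventually (\<lambda>n. norm (f m n) \<le> outer_prob \<Omega> {\<omega> \<in> space \<Omega>. \<eta>/2 < \<bar>dn n \<omega>\<bar>}) sequentially"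
      unfolding eventually_sequentially
    proof (intro exI[of _ 1] allI impI)
      fix n :: nat assume n: "1 \<le> n"
      have "{\<omega> \<in> space \<Omega>. ?e < \<bar>\<delta> ?k (dn n \<omega>)\<bar>} \<subseteq> {\<omega> \<in> space \<Omega>. \<eta>/2 < \<bar>dn n \<omega>\<bar>}"
      proof safe
        fix \<omega> assume w: "\<omega> \<in> space \<Omega>" and lt: "?e < \<bar>\<delta> ?k (dn n \<omega>)\<bar>"
        show "\<eta>/2 < \<bar>dn n \<omega>\<bar>"
        proof (rule ccontr)
          assume "\<not> \<eta>/2 < \<bar>dn n \<omega>\<bar>"
          then have "dist (dn n \<omega>) 0 < \<eta>" using \<eta> by (simp add: dist_real_def)
          moreover have "dn n \<omega> \<in> {0..}" using dnn[OF w n] by simp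
          ultimately have "dist (\<delta> ?k (dn n \<omega>)) (\<delta> ?k 0) < ?e" using h by blast
          then show False using lt z by (simp add: dist_real_def)
        qed
      qed
      then have "outer_prob \<Omega> {\<omega> \<in> space \<Omega>. ?e < \<bar>\<delta> ?k (dn n \<omega>)\<bar>} \<le> outer_prob \<Omega> {\<omega> \<in> space \<Omega>. \<eta>/2 < \<bar>dn n \<omega>\<bar>}"
        by (rule outer_prob_mono)
      then show "norm (f m n) \<le> outer_prob \<Omega> {\<omega> \<in> space \<Omega>. \<eta>/2 < \<bar>dn n \<omega>\<bar>}"
        unfolding f_def by (simp add: abs_of_nonneg[OF outer_prob_nonneg])
    qed
    from Lim_null_comparison[OF this c] show ?thesis .
  qed
  from diag[of f, OF flim] obtain g where glim: "filterlim g at_top sequentially"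
    and fg: "((\<lambda>n. f (g n) n) \<longlongrightarrow> 0) sequentially" by blast
  define kn where "kn n = ks (g n)" for n
  have knK: "\<forall>n. kn n \<in> K" using ksK by (simp add: kn_def)
  have Bkn: "((\<lambda>n. approx_error \<psi>k \<psi> (kn n) P) \<longlongrightarrow> 0) sequentially"
    unfolding kn_def using filterlim_compose[OF Bks glim] .
  have od: "o_P1 \<Omega> (\<lambda>n \<omega>. \<delta> (kn n) (dn n \<omega>))"
    unfolding o_P1_def
  proof (intro allI impI)
    fix \<epsilon> :: real assume \<epsilon>: "\<epsilon> > 0"
    have "((\<lambda>n. 1 / (real (g n) + 1)) \<longlongrightarrow> 0) sequentially"
      using filterlim_compose[OF inv_suc_lim glim] by simp
    then have ev: "eventually (\<lambda>n. 1 / (real (g n) + 1) < \<epsilon>) sequentially"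
      using \<epsilon> by (rule order_tendstoD)
    have "eventually (\<lambda>n. norm (outer_prob \<Omega> {\<omega> \<in> space \<Omega>. \<epsilon> < \<bar>\<delta> (kn n) (dn n \<omega>)\<bar>}) \<le> f (g n) n) sequentially"
      using ev
    proof eventually_elim
      case (elim n)
      have "{\<omega> \<in> space \<Omega>. \<epsilon> < \<bar>\<delta> (kn n) (dn n \<omega>)\<bar>} \<subseteq> {\<omega> \<in> space \<Omega>. 1 / (real (g n) + 1) < \<bar>\<delta> (ks (g n)) (dn n \<omega>)\<bar>}"
        using elim by (auto simp: kn_def)
      then have "outer_prob \<Omega> {\<omega> \<in> space \<Omega>. \<epsilon> < \<bar>\<delta> (kn n) (dn n \<omega>)\<bar>} \<le> f (g n) n"
        unfolding f_def by (rule outer_prob_mono)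
      then show ?case by (simp add: abs_of_nonneg[OF outer_prob_nonneg])
    qed
    from Lim_null_comparison[OF this fg]
    show "((\<lambda>n. outer_prob \<Omega> {\<omega> \<in> space \<Omega>. \<epsilon> < \<bar>\<delta> (kn n) (dn n \<omega>)\<bar>}) \<longlongrightarrow> 0) sequentially" .
  qed
  have on: "o_P1 \<Omega> (\<lambda>n \<omega>. norm (\<psi>k (kn n) (empirical Z X n \<omega>) - \<psi> P))"
    unfolding o_P1_def
  proof (intro allI impI)
    fix \<epsilon> :: real assume \<epsilon>: "\<epsilon> > 0"
    have c: "((\<lambda>n. outer_prob \<Omega> {\<omega> \<in> space \<Omega>. \<epsilon>/2 < \<bar>\<delta> (kn n) (dn n \<omega>)\<bar>}) \<longlongrightarrow> 0) sequentially"
      using od[unfolded o_P1_def, rule_format, of "\<epsilon>/2"] \<epsilon> by simp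
    have ev: "eventually (\<lambda>n. approx_error \<psi>k \<psi> (kn n) P < \<epsilon>/2) sequentially"
      using Bkn \<epsilon> by (intro order_tendstoD) auto
    have "eventually (\<lambda>n. norm (outer_prob \<Omega> {\<omega> \<in> space \<Omega>. \<epsilon> < \<bar>norm (\<psi>k (kn n) (empirical Z X n \<omega>) - \<psi> P)\<bar>})
        \<le> outer_prob \<Omega> {\<omega> \<in> space \<Omega>. \<epsilon>/2 < \<bar>\<delta> (kn n) (dn n \<omega>)\<bar>}) sequentially"
      using ev eventually_ge_at_top[of 1]
    proof eventually_elim
      case (elim n)
      have "{\<omega> \<in> space \<Omega>. \<epsilon> < \<bar>norm (\<psi>k (kn n) (empirical Z X n \<omega>) - \<psi> P)\<bar>}
          \<subseteq> {\<omega> \<in> space \<Omega>. \<epsilon>/2 < \<bar>\<delta> (kn n) (dn n \<omega>)\<bar>}"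
      proof safe
        fix \<omega> assume w: "\<omega> \<in> space \<Omega>" and lt: "\<epsilon> < \<bar>norm (\<psi>k (kn n) (empirical Z X n \<omega>) - \<psi> P)\<bar>"
        have "norm (\<psi>k (kn n) (empirical Z X n \<omega>) - \<psi> P)
            \<le> norm (\<psi>k (kn n) (empirical Z X n \<omega>) - \<psi>k (kn n) P) + norm (\<psi>k (kn n) P - \<psi> P)"
          by (rule norm_diff_triangle_le) auto
        also have "\<dots> \<le> \<delta> (kn n) (dn n \<omega>) + approx_error \<psi>k \<psi> (kn n) P"
          using bnd[OF knK[rule_format] PnD[OF w]] elim by (simp add: dn_def approx_error_def)
        finally show "\<epsilon>/2 < \<bar>\<delta> (kn n) (dn n \<omega>)\<bar>" using lt elim abs_ge_self[of "\<delta> (kn n) (dn n \<omega>)"]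
            abs_of_nonneg[OF norm_ge_zero[of "\<psi>k (kn n) (empirical Z X n \<omega>) - \<psi> P"]] by linarith
      qed
      then have "outer_prob \<Omega> {\<omega> \<in> space \<Omega>. \<epsilon> < \<bar>norm (\<psi>k (kn n) (empirical Z X n \<omega>) - \<psi> P)\<bar>}
          \<le> outer_prob \<Omega> {\<omega> \<in> space \<Omega>. \<epsilon>/2 < \<bar>\<delta> (kn n) (dn n \<omega>)\<bar>}"
        by (rule outer_prob_mono)
      then show ?case by (simp add: abs_of_nonneg[OF outer_prob_nonneg])
    qed
    from Lim_null_comparison[OF this c]
    show "((\<lambda>n. outer_prob \<Omega> {\<omega> \<in> space \<Omega>. \<epsilon> < \<bar>norm (\<psi>k (kn n) (empirical Z X n \<omega>) - \<psi> P)\<bar>}) \<longlongrightarrow> 0) sequentially" .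
  qed
  show ?thesis
    using knK Bkn od on unfolding dn_def by blast
qed

end
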